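(* Let $T$ be a binary tree rooted at $O$, with all edges having activation probability $p\in(0,1]$. Let $v$ be a vertex of $T$ with two outgoing edges $e_1,e_2$. Then $$\frac{|\Lambda(e_1)|+|\Lambda(e_2)|}{\tau(e_1)+\tau(e_2)}<\frac12.$$
   Context: Setting: the stochastic search game on a finite tree $T$ rooted at $O$. Every edge has length $1$ and is active at each stage independently with the same probability $p\in(0,1]$. The searcher moves along active edges or waits, and the hider's payoff is the expected first time the searcher traverses his edge. Orient the edges away from $O$. For a vertex $v$, $T_v$ is the subtree rooted at $v$ consisting of all edges below $v$. For an edge $e=(u,w)$, $T_e$ is $\{e\}\cup T_w$, rooted at $u$. $T$ is binary if every vertex has at most two outgoing edges. Cycle time: for a vertex or edge $z$, $\tau(z)$ is the expected time needed to start at the root of $T_z$, traverse every edge of $T_z$ and return to the root, using a depth-first strategy. Equivalently, for binary trees: - $\tau(v)=0$ if $v$ has no outgoing edge; - $\tau(e)=\tau(w)+2/p$ for $e=(u,w)$; - $\tau(v)=\tau(e)$ if $v$ has exactly one outgoing edge $e$; - $\tau(v)=\tau(w_1)+\tau(w_2)+3/p+1/(1-(1-p)^2)$ if $v$ has outgoing edges to $w_1,w_2$. The function $\Lambda$ is defined recursively on rooted binary trees. Write $\Lambda(v)=\Lambda(T_v)$ and $\Lambda(e)=\Lambda(T_e)$. - $\Lambda(v)=0$ if $v$ has no outgoing edge. - If the root $r$ has a single outgoing edge $e=(r,w)$, then $\Lambda(r)=\Lambda(e)=\Lambda(w)$. In particular, a one-edge tree has $\Lambda=0$. - If $r$ has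 two outgoing edges $e_1=(r,w_1)$ and $e_2=(r,w_2)$, then $$\Lambda(r)=\frac{\tau(e_1)}{\tau(e_1)+\tau(e_2)}\Lambda(w_1)+\frac{\tau(e_2)}{\tau(e_1)+\tau(e_2)}\Lambda(w_2)+\frac12\Big(\frac1{1-(1-p)^2}-\frac1p\Big).$$ In particular, for the tree consisting of two edges at the root, $\Lambda=\frac12\big(\frac1{1-(1-p)^2}-\frac1p\big)$. *)

theory Defs
  imports Complex_Main
begin

text \<open>Rooted binary trees (shapes). A vertex is either a leaf (no outgoing edge),
  has exactly one outgoing edge to a subtree, or has two outgoing edges to
  two subtrees. All edges have length 1.\<close>
datatype btree = Leaf | One btree | Two btree btree

fun subtrees :: "btree \<Rightarrow> btree set" where
  "subtrees Leaf = {Leaf}"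
| "subtrees (One t) = insert (One t) (subtrees t)"
| "subtrees (Two a b) = insert (Two a b) (subtrees a \<union> subtrees b)"

fun tau :: "real \<Rightarrow> btree \<Rightarrow> real" where
  "tau p Leaf = 0"
| "tau p (One t) = tau p t + 2 / p"
| "tau p (Two a b) = tau p a + tau p b + 3 / p + 1 / (1 - (1 - p)^2)"

text \<open>Cycle time of an edge e = (u,w), where w has subtree t: tau(e) = tau(w) + 2/p.\<close>
definition tau_edge :: "real \<Rightarrow> btree \<Rightarrow> real" where
  "tau_edge p t = tau p t + 2 / p"

fun Lam :: "real \<Rightarrow> btree \<Rightarrow> real" where
  "Lam p Leaf = 0"
| "Lam p (One t) = Lam p t"
| "Lam p (Two a b) =
     tau_edge p a / (tau_edge p a + tau_edge p b) * Lam p a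
   + tau_edge p b / (tau_edge p a + tau_edge p b) * Lam p b
   + 1/2 * (1 / (1 - (1 - p)^2) - 1 / p)"

text \<open>Lambda of an edge e = (u,w) whose head w has subtree t.\<close>
definition Lam_edge :: "real \<Rightarrow> btree \<Rightarrow> real" where
  "Lam_edge p t = Lam p t"

end

theory Submission
  imports Defs
begin

lemma q_facts:
  assumes "0 < (p::real)" "p \<le> 1"
  shows "0 < 1 / (1 - (1 - p)^2)" "1 / (1 - (1 - p)^2) \<le> 1 / p"
proof -
  have q: "1 - (1 - p)^2 = p * (2 - p)" by (simp add: power2_eq_square algebra_simps)
  have "p \<le> p * (2 - p)" using assms by (simp add: mult_le_cancel_left1)
  moreover have "0 < p * (2 - p)" using assms by simp
  ultimately show "0 < 1 / (1 - (1 - p)^2)" "1 / (1 - (1 - p)^2) \<le> 1 / p"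
    using assms q by (simp_all add: frac_le)
qed

lemma tau_nonneg:
  assumes "0 < (p::real)" "p \<le> 1"
  shows "0 \<le> tau p t"
  using assms q_facts[OF assms] by (induction t) auto

lemma tri: "0 \<le> (u::real) \<Longrightarrow> 0 \<le> v \<Longrightarrow> \<bar>u*x + v*y + c\<bar> \<le> u*\<bar>x\<bar> + v*\<bar>y\<bar> + \<bar>c\<bar>"
proof -
  assume "0 \<le> u" "0 \<le> v"
  have "\<bar>u*x + v*y + c\<bar> \<le> \<bar>u*x\<bar> + \<bar>v*y\<bar> + \<bar>c\<bar>" by (rule order_trans[OF abs_triangle_ineq]) (simp add: abs_triangle_ineq)
  then show ?thesis using \<open>0 \<le> u\<close> \<open>0 \<le> v\<close> by (simp add: abs_mult)
qed

lemma mono: "0 \<le> (u::real) \<Longrightarrow> u \<le> 1 \<Longrightarrow> 0 \<le> v \<Longrightarrow> v \<le> 1 \<Longrightarrow> 0 \<le> x \<Longrightarrow> 0 \<le> y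
  \<Longrightarrow> c \<le> d \<Longrightarrow> u*x + v*y + c \<le> x + y + d"
  by (metis add_mono mult_left_le_one_le)

lemma lam_bound:
  assumes "0 < (p::real)" "p \<le> 1"
  shows "\<bar>Lam p t\<bar> \<le> tau p t / 2"
proof (induction t)
  case Leaf then show ?case by simp
next
  case (One t)
  have "0 < 2/p" using assms by simp
  then obtain d where d: "d = 2/p" "0 < d" by blast
  have "\<bar>Lam p t\<bar> \<le> (tau p t + d) / 2" using One d(2) by (simp add: add_divide_distrib)
  then show ?case using d(1) by simp
next
  case (Two a b)
  define ta where "ta = tau_edge p a"
  define tb where "tb = tau_edge p b"
  define c where "c = 1/2 * (1 / (1 - (1 - p)^2) - 1 / p)"
  have ta: "0 < ta" unfolding ta_def tau_edge_def by (rule add_nonneg_pos[OF tau_nonneg[OF assms]]) (use assms in simp)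
  have tb: "0 < tb" unfolding tb_def tau_edge_def by (rule add_nonneg_pos[OF tau_nonneg[OF assms]]) (use assms in simp)
  have wa: "0 \<le> ta/(ta+tb)" "ta/(ta+tb) \<le> 1" using ta tb by auto
  have wb: "0 \<le> tb/(ta+tb)" "tb/(ta+tb) \<le> 1" using ta tb by auto
  have c: "\<bar>c\<bar> \<le> 1/p"
  proof -
    have "\<And>x y::real. 0 < x \<Longrightarrow> x \<le> y \<Longrightarrow> \<bar>1/2 * (x - y)\<bar> \<le> y" by auto
    then show ?thesis using q_facts[OF assms] unfolding c_def by blast
  qed
  have "\<bar>Lam p (Two a b)\<bar> = \<bar>ta/(ta+tb) * Lam p a + tb/(ta+tb) * Lam p b + c\<bar>"
    by (simp add: ta_def tb_def c_def)
  also have "\<dots> \<le> ta/(ta+tb) * \<bar>Lam p a\<bar> + tb/(ta+tb) * \<bar>Lam p b\<bar> + \<bar>c\<bar>"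
    using wa wb tri by blast
  also have "\<dots> \<le> \<bar>Lam p a\<bar> + \<bar>Lam p b\<bar> + 1/p"
    by (rule mono[OF wa wb abs_ge_zero abs_ge_zero c])
  also have "\<dots> \<le> tau p (Two a b) / 2"
  proof -
    have h: "\<And>x y A B d e f::real. x \<le> A/2 \<Longrightarrow> y \<le> B/2 \<Longrightarrow> 0 \<le> e \<Longrightarrow> 2*d \<le> f
       \<Longrightarrow> x + y + d \<le> (A + B + f + e)/2" by (simp add: field_simps)
    have "2*(1/p) \<le> 3/p" using assms by (simp add: divide_simps)
    from h[OF Two.IH _ this] q_facts[OF assms] show ?thesis by simp
  qed
  finally show ?case .
qed

theorem mainTheorem7:
  fixes p :: real and T w1 w2 :: btree
  assumes "0 < p" and "p \<le> 1"
    and "Two w1 w2 \<in> subtrees T"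
  shows "(\<bar>Lam_edge p w1\<bar> + \<bar>Lam_edge p w2\<bar>) / (tau_edge p w1 + tau_edge p w2) < 1/2"
proof -
  have "0 < 2/p" "0 < 4/p" using assms by simp_all
  have pos: "0 < tau_edge p w1 + tau_edge p w2"
    using tau_nonneg[OF assms(1,2), of w1] tau_nonneg[OF assms(1,2), of w2] \<open>0<2/p\<close>
    unfolding tau_edge_def by linarith
  obtain d where d: "d = 2/p" "0 < d" using \<open>0<2/p\<close> by blast
  have "\<bar>Lam p w1\<bar> + \<bar>Lam p w2\<bar> < (tau p w1 + d + (tau p w2 + d)) / 2"
    using lam_bound[OF assms(1,2), of w1] lam_bound[OF assms(1,2), of w2] d(2) by (simp add: add_divide_distrib)
  then have "\<bar>Lam_edge p w1\<bar> + \<bar>Lam_edge p w2\<bar> < (tau_edge p w1 + tau_edge p w2) / 2"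
    unfolding Lam_edge_def tau_edge_def d(1) .
  then show ?thesis using pos by (simp add: divide_simps)
qed

end
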